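(* Let $S$ be a semigroup and $T$ a finite semigroup with $T^2=T$. If $S$ is $U(\mathrm{CF})$ then $S\times T$ is $U(\mathrm{CF})$; if $S$ is $U(\mathrm{DCF})$ then $S\times T$ is $U(\mathrm{DCF})$.
   Context: For a semigroup $S$ generated by a finite set $A$, $\mathrm{WP}(S,A)=\{u\#v^{\mathrm{rev}} : u,v\in A^+,\ u=_S v\}$, where $\#\notin A$ and $v^{\mathrm{rev}}$ is the reversal of $v$. A semigroup is $U(\mathrm{CF})$ (resp. $U(\mathrm{DCF})$) if it is finitely generated and its word problem with respect to some (equivalently any) finite generating set is context-free (resp. deterministic context-free). A semigroup $T$ is decomposable if $T^2=T$. *)

theory Defs
  imports "HOL-Algebra.Group"
begin

section \<open>Semigroups (carrier-based, on HOL-Algebra monoid records; the unit field is ignored)\<close>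

definition semigroup_on :: "('a, 'm) monoid_scheme \<Rightarrow> bool" where
  "semigroup_on G \<longleftrightarrow>
     (\<forall>x\<in>carrier G. \<forall>y\<in>carrier G. x \<otimes>\<^bsub>G\<^esub> y \<in> carrier G) \<and>
     (\<forall>x\<in>carrier G. \<forall>y\<in>carrier G. \<forall>z\<in>carrier G.
        (x \<otimes>\<^bsub>G\<^esub> y) \<otimes>\<^bsub>G\<^esub> z = x \<otimes>\<^bsub>G\<^esub> (y \<otimes>\<^bsub>G\<^esub> z))"

definition decomposable :: "('a, 'm) monoid_scheme \<Rightarrow> bool" where
  "decomposable G \<longleftrightarrow>
     {x \<otimes>\<^bsub>G\<^esub> y | x y. x \<in> carrier G \<and> y \<in> carrier G} = carrier G"

fun wval :: "('a, 'm) monoid_scheme \<Rightarrow> 'a list \<Rightarrow> 'a" where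
  "wval G [] = undefined"
| "wval G (x # xs) = foldl (\<lambda>acc y. acc \<otimes>\<^bsub>G\<^esub> y) x xs"

definition generates :: "('a, 'm) monoid_scheme \<Rightarrow> 'a set \<Rightarrow> bool" where
  "generates G A \<longleftrightarrow> A \<subseteq> carrier G \<and>
     (\<forall>s\<in>carrier G. \<exists>u. u \<noteq> [] \<and> set u \<subseteq> A \<and> wval G u = s)"

text \<open>Word problem WP(S,A) = {u # v^rev : u,v in A^+, u =_S v}; the letter \<open>#\<close>
  is \<open>None\<close>, a generator a is the letter \<open>Some a\<close>.\<close>
definition WP :: "('a, 'm) monoid_scheme \<Rightarrow> 'a set \<Rightarrow> 'a option list set" where
  "WP G A = {map Some u @ [None] @ map Some (rev v) | u v.
               u \<noteq> [] \<and> v \<noteq> [] \<and> set u \<subseteq> A \<and> set v \<subseteq> A \<and> wval G u = wval G v}"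

text \<open>A context-free grammar: finite set of productions with nonterminals in nat,
  right-hand sides are lists of nonterminals (Inl) and terminals (Inr).\<close>
type_synonym 't cfg_rule = "nat \<times> (nat + 't) list"

inductive derives :: "'t cfg_rule set \<Rightarrow> (nat + 't) list \<Rightarrow> (nat + 't) list \<Rightarrow> bool"
  for P where
  refl: "derives P w w"
| step: "derives P u (x @ [Inl A] @ y) \<Longrightarrow> (A, r) \<in> P \<Longrightarrow> derives P u (x @ r @ y)"

definition cfg_lang :: "'t cfg_rule set \<Rightarrow> nat \<Rightarrow> 't list set" where
  "cfg_lang P S = {w. derives P [Inl S] (map Inr w)}"

definition context_free :: "'t list set \<Rightarrow> bool" where
  "context_free L \<longleftrightarrow> (\<exists>P S. finite P \<and> cfg_lang P S = L)"

section \<open>Deterministic context-free languages (DPDA, acceptance by final state)\<close>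

record 't dpda =
  states :: "nat set"
  inputs :: "'t set"
  stack_syms :: "nat set"
  delta :: "nat \<Rightarrow> 't option \<Rightarrow> nat \<Rightarrow> (nat \<times> nat list) option"
  init_state :: nat
  init_stack :: nat
  final :: "nat set"

definition is_dpda :: "'t dpda \<Rightarrow> bool" where
  "is_dpda M \<longleftrightarrow>
     finite (states M) \<and> finite (inputs M) \<and> finite (stack_syms M) \<and>
     init_state M \<in> states M \<and> init_stack M \<in> stack_syms M \<and> final M \<subseteq> states M \<and>
     (\<forall>q a Z p \<gamma>. delta M q a Z = Some (p, \<gamma>) \<longrightarrow>
        q \<in> states M \<and> Z \<in> stack_syms M \<and> (\<forall>b. a = Some b \<longrightarrow> b \<in> inputs M) \<and>
        p \<in> states M \<and> set \<gamma> \<subseteq> stack_syms M) \<and>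
     (\<forall>q Z. delta M q None Z \<noteq> None \<longrightarrow> (\<forall>b. delta M q (Some b) Z = None))"

text \<open>One move on configurations (state, remaining input, stack with top first).\<close>
inductive dpda_step :: "'t dpda \<Rightarrow> nat \<times> 't list \<times> nat list \<Rightarrow> nat \<times> 't list \<times> nat list \<Rightarrow> bool"
  for M where
  eps: "delta M q None Z = Some (p, \<gamma>) \<Longrightarrow> dpda_step M (q, w, Z # \<beta>) (p, w, \<gamma> @ \<beta>)"
| read: "delta M q (Some a) Z = Some (p, \<gamma>) \<Longrightarrow> dpda_step M (q, a # w, Z # \<beta>) (p, w, \<gamma> @ \<beta>)"

definition dpda_lang :: "'t dpda \<Rightarrow> 't list set" where
  "dpda_lang M = {w. \<exists>f \<beta>. f \<in> final M \<and>
      (dpda_step M)\<^sup>*\<^sup>* (init_state M, w, [init_stack M]) (f, [], \<beta>)}"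

definition det_context_free :: "'t list set \<Rightarrow> bool" where
  "det_context_free L \<longleftrightarrow> (\<exists>M. is_dpda M \<and> dpda_lang M = L)"

definition U_CF :: "('a, 'm) monoid_scheme \<Rightarrow> bool" where
  "U_CF G \<longleftrightarrow> (\<exists>A. finite A \<and> generates G A \<and> context_free (WP G A))"

definition U_DCF :: "('a, 'm) monoid_scheme \<Rightarrow> bool" where
  "U_DCF G \<longleftrightarrow> (\<exists>A. finite A \<and> generates G A \<and> det_context_free (WP G A))"

end

theory Submission
  imports Defs "HOL-Library.Nat_Bijection"
begin


inductive gl :: "'t cfg_rule set \<Rightarrow> (nat + 't) list \<Rightarrow> 't list \<Rightarrow> bool" for P where
  nil: "gl P [] []"
| tm: "gl P xs w \<Longrightarrow> gl P (Inr t # xs) (t # w)"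
| nt: "(A, r) \<in> P \<Longrightarrow> gl P r w1 \<Longrightarrow> gl P xs w2 \<Longrightarrow> gl P (Inl A # xs) (w1 @ w2)"

lemma gl_append_split: "gl P (xs @ ys) w \<Longrightarrow> \<exists>w1 w2. w = w1 @ w2 \<and> gl P xs w1 \<and> gl P ys w2"
proof (induction xs arbitrary: w)
  case Nil then show ?case by (auto intro: gl.nil)
next
  case (Cons x xs)
  from Cons.prems show ?case
  proof (cases rule: gl.cases)
    case (tm xs' w' t)
    with Cons.IH[of w'] obtain a b where "w' = a @ b" "gl P xs a" "gl P ys b" by auto
    with tm show ?thesis by (intro exI[of _ "t # a"] exI[of _ b]) (auto intro: gl.tm)
  next
    case (nt A r w1 xs' w2)
    with Cons.IH[of w2] obtain a b where "w2 = a @ b" "gl P xs a" "gl P ys b" by auto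
    with nt show ?thesis by (intro exI[of _ "w1 @ a"] exI[of _ b]) (auto intro: gl.nt)
  qed auto
qed

lemma gl_append: "gl P xs w1 \<Longrightarrow> gl P ys w2 \<Longrightarrow> gl P (xs @ ys) (w1 @ w2)"
  by (induction rule: gl.induct) (auto intro: gl.intros)

lemma gl_map_Inr: "gl P (map Inr w) w"
  by (induction w) (auto intro: gl.intros)

lemma derives_gl: "derives P u v \<Longrightarrow> gl P v w \<Longrightarrow> gl P u w"
proof (induction arbitrary: w rule: derives.induct)
  case refl then show ?case .
next
  case (step u x A y r)
  from gl_append_split[of P x "r @ y" w] step.prems obtain w1 w' where
    "w = w1 @ w'" "gl P x w1" "gl P (r @ y) w'" by auto
  moreover from this(3) gl_append_split obtain w2 w3 where "w' = w2 @ w3" "gl P r w2" "gl P y w3" by blast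
  ultimately have "gl P (x @ [Inl A] @ y) w"
    using step.hyps(2) gl.nt[OF step.hyps(2), of w2 y w3] gl_append by fastforce
  then show ?case using step.IH by blast
qed

lemma derives_trans: "derives P v w \<Longrightarrow> derives P u v \<Longrightarrow> derives P u w"
  by (induction rule: derives.induct) (auto intro: derives.step)

lemma derives_ctx: "derives P u v \<Longrightarrow> derives P (x @ u @ y) (x @ v @ y)"
proof (induction rule: derives.induct)
  case (refl w) then show ?case by (rule derives.refl)
next
  case (step u x' A y' r)
  have "derives P (x @ u @ y) ((x @ x') @ [Inl A] @ (y' @ y))" using step.IH by simp
  from derives.step[OF this step.hyps(2)] show ?case by simp
qed

lemma gl_derives: "gl P xs w \<Longrightarrow> derives P xs (map Inr w)"
proof (induction rule: gl.induct)
  case nil then show ?case by (simp add: derives.refl)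
next
  case (tm xs w t)
  from derives_ctx[OF tm.IH, of "[Inr t]" "[]"] show ?case by simp
next
  case (nt A r w1 xs w2)
  have "derives P [Inl A] r" using derives.step[OF derives.refl[of P "[] @ [Inl A] @ []"] nt.hyps(1)] by simp
  then have 1: "derives P (Inl A # xs) (r @ xs)" using derives_ctx[of P "[Inl A]" r "[]" xs] by simp
  have 2: "derives P (r @ xs) (map Inr w1 @ xs)" using derives_ctx[OF nt.IH(1), of "[]" xs] by simp
  have 3: "derives P (map Inr w1 @ xs) (map Inr w1 @ map Inr w2)" using derives_ctx[OF nt.IH(2), of "map Inr w1" "[]"] by simp
  show ?case using derives_trans[OF 3 derives_trans[OF 2 1]] by simp
qed

lemma cfg_lang_gl: "cfg_lang P S = {w. gl P [Inl S] w}"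
  unfolding cfg_lang_def using gl_derives derives_gl gl_map_Inr by blast



fun drun :: "('q \<Rightarrow> 's \<Rightarrow> 'q option) \<Rightarrow> 'q \<Rightarrow> 's list \<Rightarrow> 'q option" where
  "drun \<delta> q [] = Some q"
| "drun \<delta> q (s # w) = (case \<delta> q s of None \<Rightarrow> None | Some q' \<Rightarrow> drun \<delta> q' w)"

lemma drun_append: "drun \<delta> q (x @ y) = (case drun \<delta> q x of None \<Rightarrow> None | Some q' \<Rightarrow> drun \<delta> q' y)"
  by (induction x arbitrary: q) (auto split: option.splits)

inductive trun for \<delta> :: "'q \<Rightarrow> 's \<Rightarrow> 'q option" and h :: "'s \<Rightarrow> 't" where
  "trun \<delta> h p [] [] p"
| "\<delta> p s = Some p' \<Longrightarrow> trun \<delta> h p' w w' q \<Longrightarrow> trun \<delta> h p (h s # w) (s # w') q"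

lemma trun_iff: "trun \<delta> h p w w' q \<longleftrightarrow> w = map h w' \<and> drun \<delta> p w' = Some q"
proof
  show "trun \<delta> h p w w' q \<Longrightarrow> w = map h w' \<and> drun \<delta> p w' = Some q"
    by (induction rule: trun.induct) auto
next
  show "w = map h w' \<and> drun \<delta> p w' = Some q \<Longrightarrow> trun \<delta> h p w w' q"
  proof (induction w' arbitrary: p w)
    case Nil then show ?case by (auto intro: trun.intros)
  next
    case (Cons s w')
    then obtain p' where "\<delta> p s = Some p'" "drun \<delta> p' w' = Some q" by (auto split: option.splits)
    with Cons show ?case by (auto intro: trun.intros)
  qed
qed

lemma trun_append_split: "trun \<delta> h p (w1 @ w2) w' q \<Longrightarrow>
   \<exists>w1' w2' p'. w' = w1' @ w2' \<and> trun \<delta> h p w1 w1' p' \<and> trun \<delta> h p' w2 w2' q"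
proof (induction w1 arbitrary: p w')
  case Nil then show ?case by (auto intro: trun.intros)
next
  case (Cons t w1)
  from Cons.prems show ?case
  proof (cases rule: trun.cases)
    case (2 s p' w w'')
    with Cons.IH[of p' w''] obtain a b p'' where "w'' = a @ b" "trun \<delta> h p' w1 a p''" "trun \<delta> h p'' w2 b q" by auto
    with 2 show ?thesis by (intro exI[of _ "s # a"] exI[of _ b] exI[of _ p'']) (auto intro: trun.intros)
  qed simp
qed

lemma trun_append: "trun \<delta> h p w1 w1' p' \<Longrightarrow> trun \<delta> h p' w2 w2' q \<Longrightarrow> trun \<delta> h p (w1 @ w2) (w1' @ w2') q"
  by (induction rule: trun.induct) (auto intro: trun.intros)

definition NT :: "('q \<Rightarrow> nat) \<Rightarrow> 'q \<Rightarrow> nat \<Rightarrow> 'q \<Rightarrow> nat" where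
  "NT enc p B q = Suc (prod_encode (enc p, prod_encode (B, enc q)))"

inductive img for \<delta> :: "'q \<Rightarrow> 's \<Rightarrow> 'q option" and h :: "'s \<Rightarrow> 't" and Q enc where
  "img \<delta> h Q enc p [] [] p"
| "\<delta> p s = Some p' \<Longrightarrow> img \<delta> h Q enc p' xs ys q \<Longrightarrow> img \<delta> h Q enc p (Inr (h s) # xs) (Inr s # ys) q"
| "p \<in> Q \<Longrightarrow> p' \<in> Q \<Longrightarrow> img \<delta> h Q enc p' xs ys q \<Longrightarrow> img \<delta> h Q enc p (Inl B # xs) (Inl (NT enc p B p') # ys) q"

definition newP where
  "newP P S \<delta> h Q enc q0 F =
     {(NT enc p A q, ys) | p A q r ys. (A, r) \<in> P \<and> p \<in> Q \<and> q \<in> Q \<and> img \<delta> h Q enc p r ys q}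
     \<union> {(0, [Inl (NT enc q0 S f)]) | f. f \<in> F}"

lemma NT_inj: "inj_on enc Q \<Longrightarrow> p \<in> Q \<Longrightarrow> q \<in> Q \<Longrightarrow> p' \<in> Q \<Longrightarrow> q' \<in> Q \<Longrightarrow>
   NT enc p A q = NT enc p' A' q' \<longleftrightarrow> p = p' \<and> A = A' \<and> q = q'"
  by (auto simp: NT_def inj_on_eq_iff)

lemma img_shape: "img \<delta> h Q enc p r ys q \<Longrightarrow> (\<forall>r s r'. \<delta> r s = Some r' \<longrightarrow> s \<in> Sig \<and> r' \<in> Q) \<Longrightarrow>
  length ys = length r \<and> set ys \<subseteq> {Inl (NT enc p B q) | p B q. p \<in> Q \<and> q \<in> Q \<and> Inl B \<in> set r} \<union> Inr ` Sig"
  by (induction rule: img.induct) (auto, blast+)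

context
  fixes P :: "'t cfg_rule set" and S :: nat and \<delta> :: "'q \<Rightarrow> 's \<Rightarrow> 'q option" and h :: "'s \<Rightarrow> 't"
    and Q :: "'q set" and enc :: "'q \<Rightarrow> nat" and q0 :: 'q and F :: "'q set" and Sig :: "'s set"
  assumes fP: "finite P" and fQ: "finite Q" and fS: "finite Sig" and inj: "inj_on enc Q"
    and q0: "q0 \<in> Q" and FQ: "F \<subseteq> Q" and hd: "\<forall>r s r'. \<delta> r s = Some r' \<longrightarrow> s \<in> Sig \<and> r' \<in> Q"
begin

lemma trun_Q: "trun \<delta> h p w w' q \<Longrightarrow> p \<in> Q \<Longrightarrow> q \<in> Q"
  by (induction rule: trun.induct) (use hd in auto)

lemma complete: "gl P xs w \<Longrightarrow> trun \<delta> h p w w' q \<Longrightarrow> p \<in> Q \<Longrightarrow>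
   \<exists>ys. img \<delta> h Q enc p xs ys q \<and> gl (newP P S \<delta> h Q enc q0 F) ys w'"
proof (induction arbitrary: p w' q rule: gl.induct)
  case nil
  then show ?case by (auto elim: trun.cases intro: img.intros gl.intros)
next
  case (tm xs w t)
  from tm.prems(1) obtain s p' w'' where "t = h s" "w' = s # w''" "\<delta> p s = Some p'" "trun \<delta> h p' w w'' q"
    by (cases rule: trun.cases) auto
  moreover from this hd have "p' \<in> Q" by auto
  ultimately obtain ys where "img \<delta> h Q enc p' xs ys q" "gl (newP P S \<delta> h Q enc q0 F) ys w''"
    using tm.IH by blast
  with \<open>t = h s\<close> \<open>w' = s # w''\<close> \<open>\<delta> p s = Some p'\<close> show ?case
    by (intro exI[of _ "Inr s # ys"]) (auto intro: img.intros gl.intros)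
next
  case (nt A r w1 xs w2)
  from trun_append_split[OF nt.prems(1)] obtain w1' w2' p' where
    s: "w' = w1' @ w2'" "trun \<delta> h p w1 w1' p'" "trun \<delta> h p' w2 w2' q" by blast
  have p': "p' \<in> Q" using trun_Q[OF s(2) nt.prems(2)] .
  have qQ: "q \<in> Q" using trun_Q[OF s(3) p'] .
  from nt.IH(1)[OF s(2) nt.prems(2)] obtain ys1 where y1: "img \<delta> h Q enc p r ys1 p'" "gl (newP P S \<delta> h Q enc q0 F) ys1 w1'" by blast
  from nt.IH(2)[OF s(3) p'] obtain ys2 where y2: "img \<delta> h Q enc p' xs ys2 q" "gl (newP P S \<delta> h Q enc q0 F) ys2 w2'" by blast
  have "(NT enc p A p', ys1) \<in> newP P S \<delta> h Q enc q0 F"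
    unfolding newP_def using nt.hyps(1) nt.prems(2) p' y1(1) by blast
  with y1 y2 s(1) nt.prems(2) p' show ?case
    by (intro exI[of _ "Inl (NT enc p A p') # ys2"]) (auto intro: img.intros gl.intros)
qed

lemma sound: "gl (newP P S \<delta> h Q enc q0 F) ys w' \<Longrightarrow> img \<delta> h Q enc p xs ys q \<Longrightarrow>
   \<exists>w. gl P xs w \<and> trun \<delta> h p w w' q"
proof (induction arbitrary: p xs q rule: gl.induct)
  case nil
  then show ?case by (auto elim: img.cases intro: trun.intros gl.intros)
next
  case (tm ys w s)
  from tm.prems obtain p' xs' where "xs = Inr (h s) # xs'" "\<delta> p s = Some p'" "img \<delta> h Q enc p' xs' ys q"
    by (cases rule: img.cases) auto
  moreover from tm.IH[OF this(3)] obtain wa where "gl P xs' wa" "trun \<delta> h p' wa w q" by blast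
  ultimately show ?case by (intro exI[of _ "h s # wa"]) (auto intro: gl.intros trun.intros)
next
  case (nt n r' w1 ys w2)
  from nt.prems obtain B p' xs' where e: "xs = Inl B # xs'" "n = NT enc p B p'" "p \<in> Q" "p' \<in> Q"
    "img \<delta> h Q enc p' xs' ys q"
    by (cases rule: img.cases) auto
  from nt.hyps(1) e(2) obtain r where r: "(B, r) \<in> P" "img \<delta> h Q enc p r r' p'"
    unfolding newP_def by (auto simp: NT_def inj_on_eq_iff[OF inj] e(3,4))
  from nt.IH(1)[OF r(2)] obtain wa where a: "gl P r wa" "trun \<delta> h p wa w1 p'" by blast
  from nt.IH(2)[OF e(5)] obtain wb where b: "gl P xs' wb" "trun \<delta> h p' wb w2 q" by blast
  show ?case using a b r(1) e(1) by (auto intro: gl.intros trun_append)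
qed

lemma newP_finite: "finite (newP P S \<delta> h Q enc q0 F)"
proof -
  define X where "X r = {Inl (NT enc p B q) | p B q. p \<in> Q \<and> q \<in> Q \<and> Inl B \<in> set r} \<union> Inr ` Sig" for r :: "(nat + 't) list"
  have fX: "finite (X r)" for r
  proof -
    have fv: "finite (Inl -` set r :: nat set)" by (rule finite_vimageI) auto
    have "{Inl (NT enc p B q) | p B q. p \<in> Q \<and> q \<in> Q \<and> Inl B \<in> set r} \<subseteq>
      (\<lambda>(p, B, q). Inl (NT enc p B q)) ` (Q \<times> (Inl -` set r) \<times> Q)"
    proof
      fix x assume "x \<in> {Inl (NT enc p B q) | p B q. p \<in> Q \<and> q \<in> Q \<and> Inl B \<in> set r}"
      then obtain p B q where "x = Inl (NT enc p B q)" "p \<in> Q" "q \<in> Q" "Inl B \<in> set r" by blast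
      then show "x \<in> (\<lambda>(p, B, q). Inl (NT enc p B q)) ` (Q \<times> (Inl -` set r) \<times> Q)"
        by (intro rev_image_eqI[of "(p, B, q)"]) auto
    qed
    moreover have "finite (Q \<times> (Inl -` set r :: nat set) \<times> Q)" using fQ fv by auto
    ultimately show ?thesis unfolding X_def using fS finite_subset by blast
  qed
  define G where "G = (\<Union>(A, r)\<in>P. (\<lambda>(p, q, ys). (NT enc p A q, ys)) ` (Q \<times> Q \<times> {ys. set ys \<subseteq> X r \<and> length ys = length r}))"
  have sub: "newP P S \<delta> h Q enc q0 F \<subseteq> G \<union> (\<lambda>f. (0, [Inl (NT enc q0 S f)])) ` F"
  proof
    fix x assume "x \<in> newP P S \<delta> h Q enc q0 F"
    then consider (a) p A q r ys where "x = (NT enc p A q, ys)" "(A, r) \<in> P" "p \<in> Q" "q \<in> Q" "img \<delta> h Q enc p r ys q"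
      | (b) f where "x = (0, [Inl (NT enc q0 S f)])" "f \<in> F"
      unfolding newP_def by blast
    then show "x \<in> G \<union> (\<lambda>f. (0, [Inl (NT enc q0 S f)])) ` F"
    proof cases
      case a
      from img_shape[OF a(5) hd] have "ys \<in> {ys. set ys \<subseteq> X r \<and> length ys = length r}" unfolding X_def by auto
      then have "x \<in> (\<lambda>(p, q, ys). (NT enc p A q, ys)) ` (Q \<times> Q \<times> {ys. set ys \<subseteq> X r \<and> length ys = length r})"
        using a by (intro rev_image_eqI[of "(p, q, ys)"]) auto
      then show ?thesis unfolding G_def using a(2) by blast
    qed auto
  qed
  moreover have "finite G" unfolding G_def
    using fP fQ fX by (auto intro!: finite_lists_length_eq)
  moreover have "finite F" using FQ fQ finite_subset by blast
  ultimately show ?thesis by (meson finite_UnI finite_imageI finite_subset)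
qed

lemma cf_lang_eq: "{w'. gl (newP P S \<delta> h Q enc q0 F) [Inl 0] w'} =
    {w'. map h w' \<in> {w. gl P [Inl S] w} \<and> (\<exists>f\<in>F. drun \<delta> q0 w' = Some f)}"
proof -
  have "gl P [Inl S] (map h w') \<and> (\<exists>f\<in>F. drun \<delta> q0 w' = Some f)" if g: "gl (newP P S \<delta> h Q enc q0 F) [Inl 0] w'"
    for w'
  proof -
  from g obtain r' w1 w2 where "(0, r') \<in> newP P S \<delta> h Q enc q0 F" "gl (newP P S \<delta> h Q enc q0 F) r' w1"
    "gl (newP P S \<delta> h Q enc q0 F) [] w2" "w' = w1 @ w2"
    by (cases rule: gl.cases) auto
  moreover from this(3) have "w2 = []" by (cases rule: gl.cases) auto
  moreover from \<open>(0, r') \<in> newP P S \<delta> h Q enc q0 F\<close> obtain f where "f \<in> F" "r' = [Inl (NT enc q0 S f)]"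
  proof -
    have "\<forall>x\<in>{(NT enc p A q, ys) | p A q r ys. (A, r) \<in> P \<and> p \<in> Q \<and> q \<in> Q \<and> img \<delta> h Q enc p r ys q}. fst x \<noteq> 0"
      by (auto simp: NT_def)
    with \<open>(0, r') \<in> newP P S \<delta> h Q enc q0 F\<close> have "(0, r') \<in> {(0, [Inl (NT enc q0 S f)]) | f. f \<in> F}"
      unfolding newP_def by fastforce
    then show ?thesis using that by blast
  qed
  ultimately have f: "f \<in> F" "r' = [Inl (NT enc q0 S f)]" "w' = w1" "gl (newP P S \<delta> h Q enc q0 F) r' w1"
    by auto
  have fQ': "f \<in> Q" using f FQ by auto
  have "img \<delta> h Q enc q0 [Inl S] [Inl (NT enc q0 S f)] f"
    using q0 fQ' by (auto intro: img.intros)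
  from sound[OF f(4)[unfolded f(2)] this] f show ?thesis
    by (auto simp: trun_iff)
  qed
  moreover have "gl (newP P S \<delta> h Q enc q0 F) [Inl 0] w'" if a: "gl P [Inl S] (map h w')" "f \<in> F" "drun \<delta> q0 w' = Some f"
    for w' f
  proof -
  from a have "trun \<delta> h q0 (map h w') w' f" by (simp add: trun_iff)
  from complete[OF a(1) this q0] obtain ys where ys: "img \<delta> h Q enc q0 [Inl S] ys f" "gl (newP P S \<delta> h Q enc q0 F) ys w'" by blast
  from ys(1) obtain p' ys' where "ys = Inl (NT enc q0 S p') # ys'" "img \<delta> h Q enc p' [] ys' f"
    by (cases rule: img.cases) auto
  moreover from this(2) have "ys' = [] \<and> p' = f" by (cases rule: img.cases) auto
  ultimately have "ys = [Inl (NT enc q0 S f)]" by simp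
  moreover have "(0, [Inl (NT enc q0 S f)]) \<in> newP P S \<delta> h Q enc q0 F" using a(2) unfolding newP_def by blast
  ultimately show ?thesis
    using gl.nt[of 0 "[Inl (NT enc q0 S f)]" "newP P S \<delta> h Q enc q0 F" w' "[]" "[]", OF _ _ gl.nil] ys(2) by simp
  qed
  ultimately show ?thesis by auto
qed

end

lemma cf_transduce:
  fixes L :: "'t list set" and \<delta> :: "'q \<Rightarrow> 's \<Rightarrow> 'q option" and h :: "'s \<Rightarrow> 't" and enc :: "'q \<Rightarrow> nat"
  assumes "context_free L" "finite Q" "finite Sig" "inj_on enc Q" "q0 \<in> Q" "F \<subseteq> Q"
    "\<forall>r s r'. \<delta> r s = Some r' \<longrightarrow> s \<in> Sig \<and> r' \<in> Q"
  shows "context_free {w'. map h w' \<in> L \<and> (\<exists>f\<in>F. drun \<delta> q0 w' = Some f)}"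
proof -
  from assms(1) obtain P S where P: "finite P" "cfg_lang P S = L" unfolding context_free_def by blast
  note e = cf_lang_eq[OF P(1) assms(2-7), of S h]
  note f = newP_finite[OF P(1) assms(2-7), of S h]
  show ?thesis
    unfolding context_free_def cfg_lang_gl using e f P(2) unfolding cfg_lang_gl by metis
qed



definition EE :: "('q \<Rightarrow> nat) \<Rightarrow> nat \<Rightarrow> 'q \<Rightarrow> nat" where
  "EE enc q r = prod_encode (q, enc r)"

definition pdelta where
  "pdelta M \<delta> h Q enc n a Z = (case prod_decode n of (q, k) \<Rightarrow>
     if k \<in> enc ` Q then
       (case a of None \<Rightarrow> map_option (\<lambda>(p, \<gamma>). (prod_encode (p, k), \<gamma>)) (delta M q None Z)
        | Some s \<Rightarrow> (case \<delta> (inv_into Q enc k) s of None \<Rightarrow> None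
            | Some r' \<Rightarrow> map_option (\<lambda>(p, \<gamma>). (prod_encode (p, enc r'), \<gamma>)) (delta M q (Some (h s)) Z)))
     else None)"

definition pM where
  "pM M \<delta> h Q enc q0 F Sig = \<lparr> states = (\<lambda>(q, r). EE enc q r) ` (states M \<times> Q),
     inputs = Sig, stack_syms = stack_syms M, delta = pdelta M \<delta> h Q enc,
     init_state = EE enc (init_state M) q0, init_stack = init_stack M,
     final = (\<lambda>(q, r). EE enc q r) ` (final M \<times> F) \<rparr>"

context
  fixes M :: "'t dpda" and \<delta> :: "'q \<Rightarrow> 's \<Rightarrow> 'q option" and h :: "'s \<Rightarrow> 't"
    and Q :: "'q set" and enc :: "'q \<Rightarrow> nat" and q0 :: 'q and F :: "'q set" and Sig :: "'s set"
  assumes dM: "is_dpda M" and fQ: "finite Q" and fS: "finite Sig" and inj: "inj_on enc Q"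
    and q0: "q0 \<in> Q" and FQ: "F \<subseteq> Q" and hd: "\<forall>r s r'. \<delta> r s = Some r' \<longrightarrow> s \<in> Sig \<and> r' \<in> Q"
begin

abbreviation "M' \<equiv> pM M \<delta> h Q enc q0 F Sig"

lemma EE_eq: "r \<in> Q \<Longrightarrow> r' \<in> Q \<Longrightarrow> EE enc q r = EE enc q' r' \<longleftrightarrow> q = q' \<and> r = r'"
  by (auto simp: EE_def inj_on_eq_iff[OF inj])

lemma pdelta_EE: "r \<in> Q \<Longrightarrow> pdelta M \<delta> h Q enc (EE enc q r) a Z =
   (case a of None \<Rightarrow> map_option (\<lambda>(p, \<gamma>). (EE enc p r, \<gamma>)) (delta M q None Z)
    | Some s \<Rightarrow> (case \<delta> r s of None \<Rightarrow> None
        | Some r' \<Rightarrow> map_option (\<lambda>(p, \<gamma>). (EE enc p r', \<gamma>)) (delta M q (Some (h s)) Z)))"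
  by (auto simp: pdelta_def EE_def inv_into_f_f[OF inj] split: option.splits)

lemma pdelta_Some: "pdelta M \<delta> h Q enc n a Z = Some (p', \<gamma>) \<Longrightarrow>
   \<exists>q r. r \<in> Q \<and> n = EE enc q r \<and>
     (case a of None \<Rightarrow> \<exists>p. delta M q None Z = Some (p, \<gamma>) \<and> p' = EE enc p r
      | Some s \<Rightarrow> \<exists>r' p. \<delta> r s = Some r' \<and> delta M q (Some (h s)) Z = Some (p, \<gamma>) \<and> p' = EE enc p r')"
proof -
  assume a: "pdelta M \<delta> h Q enc n a Z = Some (p', \<gamma>)"
  obtain q k where qk: "prod_decode n = (q, k)" by (cases "prod_decode n")
  with a have "k \<in> enc ` Q" by (auto simp: pdelta_def split: if_splits)
  then obtain r where r: "r \<in> Q" "k = enc r" by blast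
  have n: "n = EE enc q r" using qk r by (metis EE_def prod_decode_inverse)
  from a show ?thesis unfolding n pdelta_EE[OF r(1)] using r(1)
    by (intro exI[of _ q] exI[of _ r]) (auto split: option.splits)
qed

lemma pM_dpda: "is_dpda M'"
proof -
  have st: "finite (states M)" "finite (stack_syms M)" "init_state M \<in> states M" "init_stack M \<in> stack_syms M"
    "final M \<subseteq> states M"
    and dl: "\<And>q a Z p \<gamma>. delta M q a Z = Some (p, \<gamma>) \<Longrightarrow>
        q \<in> states M \<and> Z \<in> stack_syms M \<and> (\<forall>b. a = Some b \<longrightarrow> b \<in> inputs M) \<and>
        p \<in> states M \<and> set \<gamma> \<subseteq> stack_syms M"
    and det: "\<And>q Z. delta M q None Z \<noteq> None \<Longrightarrow> (\<forall>b. delta M q (Some b) Z = None)"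
    using dM unfolding is_dpda_def by blast+
  have A: "\<forall>n a Z p \<gamma>. pdelta M \<delta> h Q enc n a Z = Some (p, \<gamma>) \<longrightarrow>
        n \<in> (\<lambda>(q, r). EE enc q r) ` (states M \<times> Q) \<and> Z \<in> stack_syms M \<and> (\<forall>b. a = Some b \<longrightarrow> b \<in> Sig) \<and>
        p \<in> (\<lambda>(q, r). EE enc q r) ` (states M \<times> Q) \<and> set \<gamma> \<subseteq> stack_syms M"
  proof (intro allI impI)
    fix n a Z p \<gamma> assume "pdelta M \<delta> h Q enc n a Z = Some (p, \<gamma>)"
    from pdelta_Some[OF this] obtain q r where qr: "r \<in> Q" "n = EE enc q r" and
      c: "(case a of None \<Rightarrow> \<exists>p0. delta M q None Z = Some (p0, \<gamma>) \<and> p = EE enc p0 r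
      | Some s \<Rightarrow> \<exists>r' p0. \<delta> r s = Some r' \<and> delta M q (Some (h s)) Z = Some (p0, \<gamma>) \<and> p = EE enc p0 r')"
      by blast
    show "n \<in> (\<lambda>(q, r). EE enc q r) ` (states M \<times> Q) \<and> Z \<in> stack_syms M \<and> (\<forall>b. a = Some b \<longrightarrow> b \<in> Sig) \<and>
        p \<in> (\<lambda>(q, r). EE enc q r) ` (states M \<times> Q) \<and> set \<gamma> \<subseteq> stack_syms M"
    proof (cases a)
      case None
      with c obtain p0 where "delta M q None Z = Some (p0, \<gamma>)" "p = EE enc p0 r" by auto
      with dl[OF this(1)] qr show ?thesis using None by auto
    next
      case (Some s)
      with c obtain r' p0 where "\<delta> r s = Some r'" "delta M q (Some (h s)) Z = Some (p0, \<gamma>)" "p = EE enc p0 r'" by auto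
      with dl[OF this(2)] qr hd show ?thesis using Some by auto
    qed
  qed
  have B: "\<forall>n Z. pdelta M \<delta> h Q enc n None Z \<noteq> None \<longrightarrow> (\<forall>b. pdelta M \<delta> h Q enc n (Some b) Z = None)"
  proof (intro allI impI)
    fix n Z b assume "pdelta M \<delta> h Q enc n None Z \<noteq> None"
    then obtain p \<gamma> where "pdelta M \<delta> h Q enc n None Z = Some (p, \<gamma>)" by auto
    from pdelta_Some[OF this] obtain q r where "r \<in> Q" "n = EE enc q r" "delta M q None Z \<noteq> None" by auto
    with det show "pdelta M \<delta> h Q enc n (Some b) Z = None" by (simp add: pdelta_EE split: option.splits)
  qed
  show ?thesis unfolding is_dpda_def pM_def using st fQ fS q0 FQ A B by auto
qed

lemma fwd_step: assumes "dpda_step M' (n, w, st) (n', w', st')" shows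
  "\<exists>q r q' r'. r \<in> Q \<and> r' \<in> Q \<and> n = EE enc q r \<and> n' = EE enc q' r' \<and>
    dpda_step M (q, map h w, st) (q', map h w', st') \<and> (w = w' \<and> r' = r \<or> (\<exists>s. w = s # w' \<and> \<delta> r s = Some r'))"
  using assms
proof (cases rule: dpda_step.cases)
  case (eps Z \<gamma> \<beta>)
  from pdelta_Some[OF eps(4)[unfolded pM_def, simplified]] obtain q r p0 where
    "r \<in> Q" "n = EE enc q r" "delta M q None Z = Some (p0, \<gamma>)" "n' = EE enc p0 r" by auto
  with eps show ?thesis by (intro exI[of _ q] exI[of _ r] exI[of _ p0] exI[of _ r]) (auto intro: dpda_step.eps)
next
  case (read a Z \<gamma> \<beta>)
  from pdelta_Some[OF read(4)[unfolded pM_def, simplified]] obtain q r r' p0 where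
    "r \<in> Q" "n = EE enc q r" "\<delta> r a = Some r'" "delta M q (Some (h a)) Z = Some (p0, \<gamma>)" "n' = EE enc p0 r'" by auto
  with read hd show ?thesis by (intro exI[of _ q] exI[of _ r] exI[of _ p0] exI[of _ r']) (auto intro: dpda_step.read)
qed

lemma fwd_run: "(dpda_step M')\<^sup>*\<^sup>* c c' \<Longrightarrow> c = (EE enc q r, w, st) \<Longrightarrow> r \<in> Q \<Longrightarrow> c' = (n', w', st') \<Longrightarrow>
  \<exists>q' r' x. r' \<in> Q \<and> n' = EE enc q' r' \<and> w = x @ w' \<and> drun \<delta> r x = Some r' \<and>
    (dpda_step M)\<^sup>*\<^sup>* (q, map h w, st) (q', map h w', st')"
proof (induction arbitrary: n' w' st' rule: rtranclp_induct)
  case base then show ?case by (intro exI[of _ q] exI[of _ r] exI[of _ "[]"]) auto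
next
  case (step y z)
  obtain n1 w1 st1 where y: "y = (n1, w1, st1)" by (cases y)
  from step.IH[OF step.prems(1,2) y] obtain q1 r1 x where
    i: "r1 \<in> Q" "n1 = EE enc q1 r1" "w = x @ w1" "drun \<delta> r x = Some r1"
    "(dpda_step M)\<^sup>*\<^sup>* (q, map h w, st) (q1, map h w1, st1)" by blast
  from fwd_step[OF step.hyps(2)[unfolded y step.prems(3)]] obtain qa ra q' r' where
    f: "ra \<in> Q" "r' \<in> Q" "n1 = EE enc qa ra" "n' = EE enc q' r'"
    "dpda_step M (qa, map h w1, st1) (q', map h w', st')" "(w1 = w' \<and> r' = ra \<or> (\<exists>s. w1 = s # w' \<and> \<delta> ra s = Some r'))"
    by blast
  from f(3) i(2) have "qa = q1 \<and> ra = r1" using EE_eq f(1) i(1) by metis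
  with f i show ?case
    by (intro exI[of _ q'] exI[of _ r'] exI[of _ "x @ (if w1 = w' then [] else [hd w1])"])
      (auto simp: drun_append intro: rtranclp.rtrancl_into_rtrancl)
qed

lemma bwd_step: assumes "dpda_step M (q, map h w, st) (q', V, st')" "r \<in> Q" "drun \<delta> r w \<noteq> None" shows
   "\<exists>w' r'. r' \<in> Q \<and> V = map h w' \<and> dpda_step M' (EE enc q r, w, st) (EE enc q' r', w', st') \<and>
     (w = w' \<and> r' = r \<or> (\<exists>s. w = s # w' \<and> \<delta> r s = Some r'))"
  using assms(1)
proof (cases rule: dpda_step.cases)
  case (eps Z \<gamma> \<beta>)
  have "pdelta M \<delta> h Q enc (EE enc q r) None Z = Some (EE enc q' r, \<gamma>)"
    using eps by (simp add: pdelta_EE[OF \<open>r \<in> Q\<close>])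
  then have "dpda_step M' (EE enc q r, w, Z # \<beta>) (EE enc q' r, w, \<gamma> @ \<beta>)"
    by (intro dpda_step.eps) (simp add: pM_def)
  with eps \<open>r \<in> Q\<close> show ?thesis by (intro exI[of _ w] exI[of _ r]) auto
next
  case (read a Z \<gamma> \<beta>)
  from read(1) obtain s w' where sw: "w = s # w'" "h s = a" "map h w' = V" by (cases w) auto
  from \<open>drun \<delta> r w \<noteq> None\<close> sw obtain r' where r': "\<delta> r s = Some r'" by (auto split: option.splits)
  with hd have "r' \<in> Q" by blast
  have "pdelta M \<delta> h Q enc (EE enc q r) (Some s) Z = Some (EE enc q' r', \<gamma>)"
    using read sw r' by (simp add: pdelta_EE[OF \<open>r \<in> Q\<close>])
  then have "dpda_step M' (EE enc q r, s # w', Z # \<beta>) (EE enc q' r', w', \<gamma> @ \<beta>)"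
    by (intro dpda_step.read) (simp add: pM_def)
  with read sw r' \<open>r' \<in> Q\<close> show ?thesis by (intro exI[of _ w'] exI[of _ r']) auto
qed

lemma bwd_run: "(dpda_step M)\<^sup>*\<^sup>* c c' \<Longrightarrow> c = (q, map h w, st) \<Longrightarrow> r \<in> Q \<Longrightarrow> drun \<delta> r w \<noteq> None \<Longrightarrow>
  c' = (q', V, st') \<Longrightarrow>
  \<exists>x w'' r'. r' \<in> Q \<and> w = x @ w'' \<and> V = map h w'' \<and> drun \<delta> r x = Some r' \<and>
    (dpda_step M')\<^sup>*\<^sup>* (EE enc q r, w, st) (EE enc q' r', w'', st')"
proof (induction arbitrary: q' V st' rule: rtranclp_induct)
  case base then show ?case by (intro exI[of _ "[]"] exI[of _ w] exI[of _ r]) auto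
next
  case (step y z)
  obtain q1 V1 st1 where y: "y = (q1, V1, st1)" by (cases y)
  from step.IH[OF step.prems(1,2,3) y] obtain x w1 r1 where
    i: "r1 \<in> Q" "w = x @ w1" "V1 = map h w1" "drun \<delta> r x = Some r1"
    "(dpda_step M')\<^sup>*\<^sup>* (EE enc q r, w, st) (EE enc q1 r1, w1, st1)" by blast
  have "drun \<delta> r1 w1 \<noteq> None" using step.prems(3) i(2,4) by (simp add: drun_append)
  from bwd_step[OF step.hyps(2)[unfolded y step.prems(4) i(3)] i(1) this] obtain w' r' where
    b: "r' \<in> Q" "V = map h w'" "dpda_step M' (EE enc q1 r1, w1, st1) (EE enc q' r', w', st')"
    "(w1 = w' \<and> r' = r1 \<or> (\<exists>s. w1 = s # w' \<and> \<delta> r1 s = Some r'))" by blast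
  from b i show ?case
    by (intro exI[of _ "x @ (if w1 = w' then [] else [hd w1])"] exI[of _ w'] exI[of _ r'])
      (auto simp: drun_append intro: rtranclp.rtrancl_into_rtrancl)
qed

lemma pM_lang: "dpda_lang M' = {w'. map h w' \<in> dpda_lang M \<and> (\<exists>f\<in>F. drun \<delta> q0 w' = Some f)}"
proof -
  have "map h w \<in> dpda_lang M \<and> (\<exists>f\<in>F. drun \<delta> q0 w = Some f)" if "w \<in> dpda_lang M'" for w
  proof -
    from that obtain f \<beta> where f: "f \<in> final M'" "(dpda_step M')\<^sup>*\<^sup>* (init_state M', w, [init_stack M']) (f, [], \<beta>)"
      unfolding dpda_lang_def by blast
    from f(1) obtain qf rf where qf: "qf \<in> final M" "rf \<in> F" "f = EE enc qf rf" by (auto simp: pM_def)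
    from fwd_run[OF f(2), of "init_state M" q0 w "[init_stack M]" f "[]" \<beta>] q0 obtain q' r' x where
      g: "r' \<in> Q" "f = EE enc q' r'" "w = x @ []" "drun \<delta> q0 x = Some r'"
      "(dpda_step M)\<^sup>*\<^sup>* (init_state M, map h w, [init_stack M]) (q', map h [], \<beta>)"
      by (auto simp: pM_def)
    from g(2) qf(3) have "q' = qf \<and> r' = rf" using EE_eq g(1) qf(2) FQ by (metis subsetD)
    with g qf show ?thesis unfolding dpda_lang_def by auto
  qed
  moreover have "w \<in> dpda_lang M'" if "map h w \<in> dpda_lang M" "f \<in> F" "drun \<delta> q0 w = Some f" for w f
  proof -
    from that(1) obtain qf \<beta> where qf: "qf \<in> final M" "(dpda_step M)\<^sup>*\<^sup>* (init_state M, map h w, [init_stack M]) (qf, [], \<beta>)"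
      unfolding dpda_lang_def by blast
    from bwd_run[OF qf(2) HOL.refl q0 _ HOL.refl] that(3) obtain x w'' r' where
      b: "r' \<in> Q" "w = x @ w''" "[] = map h w''" "drun \<delta> q0 x = Some r'"
      "(dpda_step M')\<^sup>*\<^sup>* (EE enc (init_state M) q0, w, [init_stack M]) (EE enc qf r', w'', \<beta>)" by auto
    from b that(3) have "r' = f" by simp
    with b qf that(2) show ?thesis unfolding dpda_lang_def by (auto simp: pM_def)
  qed
  ultimately show ?thesis by blast
qed

end

lemma dcf_transduce:
  fixes L :: "'t list set" and \<delta> :: "'q \<Rightarrow> 's \<Rightarrow> 'q option" and h :: "'s \<Rightarrow> 't" and enc :: "'q \<Rightarrow> nat"
  assumes "det_context_free L" "finite Q" "finite Sig" "inj_on enc Q" "q0 \<in> Q" "F \<subseteq> Q"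
    "\<forall>r s r'. \<delta> r s = Some r' \<longrightarrow> s \<in> Sig \<and> r' \<in> Q"
  shows "det_context_free {w'. map h w' \<in> L \<and> (\<exists>f\<in>F. drun \<delta> q0 w' = Some f)}"
proof -
  from assms(1) obtain M where M: "is_dpda M" "dpda_lang M = L" unfolding det_context_free_def by blast
  note e = pM_lang[OF M(1) assms(2-7), of h]
  note f = pM_dpda[OF M(1) assms(2-7), of h]
  show ?thesis unfolding det_context_free_def using e f M(2) by metis
qed



datatype 'b st = St | P1 'b | Mid 'b | P2 'b 'b

fun sdelta :: "('b, 'n) monoid_scheme \<Rightarrow> 'a set \<Rightarrow> 'b st \<Rightarrow> ('a \<times> 'b) option \<Rightarrow> 'b st option" where
  "sdelta T A St (Some (a, t)) = (if a \<in> A \<and> t \<in> carrier T then Some (P1 t) else None)"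
| "sdelta T A (P1 x) (Some (a, t)) = (if x \<in> carrier T \<and> a \<in> A \<and> t \<in> carrier T then Some (P1 (x \<otimes>\<^bsub>T\<^esub> t)) else None)"
| "sdelta T A (P1 x) None = (if x \<in> carrier T then Some (Mid x) else None)"
| "sdelta T A (Mid x) (Some (a, t)) = (if x \<in> carrier T \<and> a \<in> A \<and> t \<in> carrier T then Some (P2 x t) else None)"
| "sdelta T A (P2 x y) (Some (a, t)) = (if x \<in> carrier T \<and> y \<in> carrier T \<and> a \<in> A \<and> t \<in> carrier T then Some (P2 x (t \<otimes>\<^bsub>T\<^esub> y)) else None)"
| "sdelta T A _ _ = None"

definition sQ :: "('b, 'n) monoid_scheme \<Rightarrow> 'b st set" where
  "sQ T = {St} \<union> P1 ` carrier T \<union> Mid ` carrier T \<union> (\<lambda>(x, y). P2 x y) ` (carrier T \<times> carrier T)"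

definition sSig :: "('b, 'n) monoid_scheme \<Rightarrow> 'a set \<Rightarrow> ('a \<times> 'b) option set" where
  "sSig T A = {None} \<union> Some ` (A \<times> carrier T)"

definition sF :: "('b, 'n) monoid_scheme \<Rightarrow> 'b st set" where
  "sF T = (\<lambda>x. P2 x x) ` carrier T"

lemma drun_Sig: "\<forall>r s r'. \<delta> r s = Some r' \<longrightarrow> s \<in> Sig \<Longrightarrow> drun \<delta> r w = Some r' \<Longrightarrow> set w \<subseteq> Sig"
  by (induction w arbitrary: r) (auto split: option.splits, blast)

lemma foldl_closed: "semigroup_on T \<Longrightarrow> x \<in> carrier T \<Longrightarrow> set ts \<subseteq> carrier T \<Longrightarrow>
   foldl (\<lambda>acc y. acc \<otimes>\<^bsub>T\<^esub> y) x ts \<in> carrier T"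
  by (induction ts arbitrary: x) (auto simp: semigroup_on_def)

lemma wval_closed: "semigroup_on T \<Longrightarrow> ts \<noteq> [] \<Longrightarrow> set ts \<subseteq> carrier T \<Longrightarrow> wval T ts \<in> carrier T"
  by (cases ts) (auto intro: foldl_closed)

lemma foldl_assoc: "semigroup_on T \<Longrightarrow> a \<in> carrier T \<Longrightarrow> b \<in> carrier T \<Longrightarrow> set ts \<subseteq> carrier T \<Longrightarrow>
   foldl (\<lambda>acc y. acc \<otimes>\<^bsub>T\<^esub> y) (a \<otimes>\<^bsub>T\<^esub> b) ts = a \<otimes>\<^bsub>T\<^esub> foldl (\<lambda>acc y. acc \<otimes>\<^bsub>T\<^esub> y) b ts"
proof (induction ts arbitrary: b)
  case Nil then show ?case by simp
next
  case (Cons t ts)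
  have "(a \<otimes>\<^bsub>T\<^esub> b) \<otimes>\<^bsub>T\<^esub> t = a \<otimes>\<^bsub>T\<^esub> (b \<otimes>\<^bsub>T\<^esub> t)" using Cons.prems unfolding semigroup_on_def by auto
  moreover have "b \<otimes>\<^bsub>T\<^esub> t \<in> carrier T" using Cons.prems unfolding semigroup_on_def by auto
  ultimately show ?case using Cons by simp
qed

lemma wval_cons: "semigroup_on T \<Longrightarrow> t \<in> carrier T \<Longrightarrow> us \<noteq> [] \<Longrightarrow> set us \<subseteq> carrier T \<Longrightarrow>
   wval T (t # us) = t \<otimes>\<^bsub>T\<^esub> wval T us"
  by (cases us) (auto simp: foldl_assoc)

lemma foldr_wval: "semigroup_on T \<Longrightarrow> y \<in> carrier T \<Longrightarrow> set ts \<subseteq> carrier T \<Longrightarrow>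
   foldr (\<lambda>t acc. t \<otimes>\<^bsub>T\<^esub> acc) ts y = wval T (ts @ [y])"
proof (induction ts)
  case Nil then show ?case by simp
next
  case (Cons t ts)
  then show ?case using wval_cons[of T t "ts @ [y]"] by simp
qed

lemma foldl_DirProd: "foldl (\<lambda>acc y. acc \<otimes>\<^bsub>S \<times>\<times> T\<^esub> y) x zs =
   (foldl (\<lambda>acc y. acc \<otimes>\<^bsub>S\<^esub> y) (fst x) (map fst zs), foldl (\<lambda>acc y. acc \<otimes>\<^bsub>T\<^esub> y) (snd x) (map snd zs))"
  by (induction zs arbitrary: x) (auto simp: mult_DirProd')

lemma wval_DirProd: "zs \<noteq> [] \<Longrightarrow> wval (S \<times>\<times> T) zs = (wval S (map fst zs), wval T (map snd zs))"
  by (cases zs) (auto simp: foldl_DirProd)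

lemma pow_decomp: "semigroup_on T \<Longrightarrow> decomposable T \<Longrightarrow> t \<in> carrier T \<Longrightarrow>
   \<exists>ts. length ts = Suc n \<and> set ts \<subseteq> carrier T \<and> wval T ts = t"
proof (induction n arbitrary: t)
  case 0 then show ?case by (intro exI[of _ "[t]"]) auto
next
  case (Suc n)
  from Suc.prems(3) \<open>decomposable T\<close> obtain a b where ab: "a \<in> carrier T" "b \<in> carrier T" "t = a \<otimes>\<^bsub>T\<^esub> b"
    unfolding decomposable_def by blast
  from Suc.IH[OF Suc.prems(1,2) ab(2)] obtain ts where ts: "length ts = Suc n" "set ts \<subseteq> carrier T" "wval T ts = b" by blast
  then have "ts \<noteq> []" by auto
  with ts ab Suc.prems(1) have "wval T (a # ts) = t" using wval_cons[of T a ts] by simp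
  with ts show ?case by (intro exI[of _ "a # ts"]) (auto simp del: wval.simps simp: ab)
qed

context
  fixes S :: "('a, 'm) monoid_scheme" and T :: "('b, 'n) monoid_scheme" and A :: "'a set"
  assumes sT: "semigroup_on T" and fT: "finite (carrier T)" and dT: "decomposable T"
    and fA: "finite A" and gA: "generates S A"
begin

abbreviation "\<delta> \<equiv> sdelta T A"
abbreviation "h \<equiv> map_option (fst :: 'a \<times> 'b \<Rightarrow> 'a)"

lemma mult_closed: "x \<in> carrier T \<Longrightarrow> y \<in> carrier T \<Longrightarrow> x \<otimes>\<^bsub>T\<^esub> y \<in> carrier T"
  using sT unfolding semigroup_on_def by auto

lemma hd_ok: "\<forall>r s r'. \<delta> r s = Some r' \<longrightarrow> s \<in> sSig T A \<and> r' \<in> sQ T"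
proof (intro allI impI)
  fix r s r' assume "\<delta> r s = Some r'"
  then show "s \<in> sSig T A \<and> r' \<in> sQ T"
    by (cases "(T, A, r, s)" rule: sdelta.cases) (auto simp: sSig_def sQ_def mult_closed split: if_splits)
qed

lemma finQ: "finite (sQ T)" using fT unfolding sQ_def by auto
lemma finSig: "finite (sSig T A)" using fT fA unfolding sSig_def by auto

lemma L1: "x \<in> carrier T \<Longrightarrow> set z \<subseteq> A \<times> carrier T \<Longrightarrow>
   drun \<delta> (P1 x) (map Some z) = Some (P1 (foldl (\<lambda>acc y. acc \<otimes>\<^bsub>T\<^esub> y) x (map snd z)))"
  by (induction z arbitrary: x) (auto simp: mult_closed)

lemma L1': "z \<noteq> [] \<Longrightarrow> set z \<subseteq> A \<times> carrier T \<Longrightarrow> drun \<delta> St (map Some z) = Some (P1 (wval T (map snd z)))"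
  by (cases z) (auto simp: L1)

lemma foldr_closed: "y \<in> carrier T \<Longrightarrow> set ts \<subseteq> carrier T \<Longrightarrow> foldr (\<lambda>t acc. t \<otimes>\<^bsub>T\<^esub> acc) ts y \<in> carrier T"
  by (induction ts) (auto simp: mult_closed)

lemma L2: "x \<in> carrier T \<Longrightarrow> y \<in> carrier T \<Longrightarrow> set z \<subseteq> A \<times> carrier T \<Longrightarrow>
   drun \<delta> (P2 x y) (map Some (rev z)) = Some (P2 x (foldr (\<lambda>t acc. t \<otimes>\<^bsub>T\<^esub> acc) (map snd z) y))"
proof (induction z)
  case Nil then show ?case by simp
next
  case (Cons a z)
  have c: "foldr (\<lambda>t acc. t \<otimes>\<^bsub>T\<^esub> acc) (map snd z) y \<in> carrier T"
    using Cons.prems by (intro foldr_closed) auto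
  show ?case using Cons c by (cases a) (auto simp: drun_append)
qed

lemma L2': "x \<in> carrier T \<Longrightarrow> z \<noteq> [] \<Longrightarrow> set z \<subseteq> A \<times> carrier T \<Longrightarrow>
   drun \<delta> (Mid x) (map Some (rev z)) = Some (P2 x (wval T (map snd z)))"
proof -
  assume a: "x \<in> carrier T" "z \<noteq> []" "set z \<subseteq> A \<times> carrier T"
  then obtain zs zl where z: "z = zs @ [zl]" by (metis rev_exhaust)
  obtain a0 t0 where zl: "zl = (a0, t0)" by (cases zl)
  have "t0 \<in> carrier T" "a0 \<in> A" "set zs \<subseteq> A \<times> carrier T" using a(3) z zl by auto
  moreover have "set (map snd zs) \<subseteq> carrier T" using a(3) z by auto
  ultimately show ?thesis using a(1) z zl L2[of x t0 zs] foldr_wval[OF sT, of t0 "map snd zs"]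
    by auto
qed

lemma gen_B: "generates (S \<times>\<times> T) (A \<times> carrier T)"
proof -
  have AS: "A \<subseteq> carrier S" using gA unfolding generates_def by blast
  have "\<exists>u. u \<noteq> [] \<and> set u \<subseteq> A \<times> carrier T \<and> wval (S \<times>\<times> T) u = p" if pc: "p \<in> carrier (S \<times>\<times> T)" for p
  proof -
    obtain s t where p: "p = (s, t)" "s \<in> carrier S" "t \<in> carrier T" using pc by (cases p) auto
    from gA p(2) obtain u where u: "u \<noteq> []" "set u \<subseteq> A" "wval S u = s" unfolding generates_def by blast
    from pow_decomp[OF sT dT p(3), of "length u - 1"] u(1) obtain ts where
      ts: "length ts = length u" "set ts \<subseteq> carrier T" "wval T ts = t" by (cases u) auto
    have "set (zip u ts) \<subseteq> A \<times> carrier T" using u(2) ts(2) by (auto dest: set_zip_leftD set_zip_rightD)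
    moreover have "zip u ts \<noteq> []" using u(1) ts(1) by (cases u; cases ts) auto
    moreover have "wval (S \<times>\<times> T) (zip u ts) = p"
      using wval_DirProd[OF \<open>zip u ts \<noteq> []\<close>, of S T] ts(1) u(3) ts(3) p(1) by simp
    ultimately show ?thesis by blast
  qed
  then show ?thesis unfolding generates_def using AS by auto
qed

lemma map_h_Some: "map h al = map Some u \<Longrightarrow> al = map Some (map the al) \<and> map fst (map the al) = u"
  by (induction al arbitrary: u) auto

lemma WP_eq: "WP (S \<times>\<times> T) (A \<times> carrier T) =
   {w'. map h w' \<in> WP S A \<and> (\<exists>f\<in>sF T. drun \<delta> St w' = Some f)}"
proof (intro equalityI subsetI)
  fix w' assume "w' \<in> WP (S \<times>\<times> T) (A \<times> carrier T)"
  then obtain z z' where z: "w' = map Some z @ [None] @ map Some (rev z')" "z \<noteq> []" "z' \<noteq> []"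
    "set z \<subseteq> A \<times> carrier T" "set z' \<subseteq> A \<times> carrier T" "wval (S \<times>\<times> T) z = wval (S \<times>\<times> T) z'"
    unfolding WP_def by blast
  from z(6) have eqs: "wval S (map fst z) = wval S (map fst z')" "wval T (map snd z) = wval T (map snd z')"
    using wval_DirProd[OF z(2), of S T] wval_DirProd[OF z(3), of S T] by auto
  have "map h w' = map Some (map fst z) @ [None] @ map Some (rev (map fst z'))"
    using z(1) by (simp add: rev_map)
  moreover have "set (map fst z) \<subseteq> A" "set (map fst z') \<subseteq> A" using z(4,5) by auto
  ultimately have 1: "map h w' \<in> WP S A" unfolding WP_def using z(2,3) eqs(1)
    by (intro CollectI exI[of _ "map fst z"] exI[of _ "map fst z'"]) auto
  define X where "X = wval T (map snd z)"
  have X: "X \<in> carrier T" unfolding X_def using z(2,4) by (intro wval_closed[OF sT]) auto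
  have "drun \<delta> St w' = Some (P2 X X)"
    using z(1) L1'[OF z(2,4)] L2'[OF X z(3,5)] X eqs(2) by (simp add: drun_append X_def)
  moreover have "P2 X X \<in> sF T" using X unfolding sF_def by auto
  ultimately show "w' \<in> {w'. map h w' \<in> WP S A \<and> (\<exists>f\<in>sF T. drun \<delta> St w' = Some f)}" using 1 by auto
next
  fix w' assume "w' \<in> {w'. map h w' \<in> WP S A \<and> (\<exists>f\<in>sF T. drun \<delta> St w' = Some f)}"
  then obtain u v f where uv: "map h w' = map Some u @ [None] @ map Some (rev v)" "u \<noteq> []" "v \<noteq> []"
    "set u \<subseteq> A" "set v \<subseteq> A" "wval S u = wval S v" and f: "f \<in> sF T" "drun \<delta> St w' = Some f"
    unfolding WP_def by blast
  from uv(1) obtain al rest where ar: "w' = al @ rest" "map h al = map Some u" "map h rest = None # map Some (rev v)"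
    by (auto simp: map_eq_append_conv)
  from ar(3) obtain b ga where bg: "rest = b # ga" "h b = None" "map h ga = map Some (rev v)"
    by (auto simp: map_eq_Cons_conv)
  from bg(2) have b: "b = None" by simp
  define z where "z = map the al"
  define z' where "z' = rev (map the ga)"
  from map_h_Some[OF ar(2)] have zz: "al = map Some z" "map fst z = u" unfolding z_def by auto
  from map_h_Some[OF bg(3)] have zz': "ga = map Some (rev z')" "map fst z' = v" unfolding z'_def
    by (auto simp: rev_map[symmetric])
  have sig: "set w' \<subseteq> sSig T A" using drun_Sig[OF _ f(2)] hd_ok by blast
  have zs: "set z \<subseteq> A \<times> carrier T" using sig ar(1) zz(1) by (auto simp: sSig_def)
  have zs': "set z' \<subseteq> A \<times> carrier T" using sig ar(1) bg(1) zz'(1) by (auto simp: sSig_def)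
  have zne: "z \<noteq> []" "z' \<noteq> []" using uv(2,3) zz(2) zz'(2) by auto
  define X where "X = wval T (map snd z)"
  have X: "X \<in> carrier T" unfolding X_def using zne zs by (intro wval_closed[OF sT]) auto
  have "drun \<delta> St w' = Some (P2 X (wval T (map snd z')))"
    using ar(1) bg(1) b zz(1) zz'(1) L1'[OF zne(1) zs] L2'[OF X zne(2) zs'] X by (simp add: drun_append X_def)
  with f have "X = wval T (map snd z')" unfolding sF_def by auto
  then have "wval (S \<times>\<times> T) z = wval (S \<times>\<times> T) z'"
    using wval_DirProd[OF zne(1), of S T] wval_DirProd[OF zne(2), of S T] uv(6) zz(2) zz'(2) X_def by simp
  then show "w' \<in> WP (S \<times>\<times> T) (A \<times> carrier T)" unfolding WP_def
    using ar(1) bg(1) b zz(1) zz'(1) zne zs zs' by (intro CollectI exI[of _ z] exI[of _ z']) simp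
qed

end



theorem mainTheorem4:
  fixes S :: "('a, 'm) monoid_scheme" and T :: "('b, 'n) monoid_scheme"
  assumes "semigroup_on S" and "semigroup_on T"
    and "finite (carrier T)" and "decomposable T"
  shows "(U_CF S \<longrightarrow> U_CF (S \<times>\<times> T)) \<and> (U_DCF S \<longrightarrow> U_DCF (S \<times>\<times> T))"
proof -
  note sT = assms(2) and fT = assms(3) and dT = assms(4)
  have fQ: "finite (sQ T)" using fT unfolding sQ_def by auto
  obtain enc :: "'b st \<Rightarrow> nat" where inj: "inj_on enc (sQ T)"
    using finite_imp_inj_to_nat_seg[OF fQ] by blast
  have q0: "St \<in> sQ T" unfolding sQ_def by auto
  have FQ: "sF T \<subseteq> sQ T" unfolding sF_def sQ_def by auto
  have cf: "U_CF (S \<times>\<times> T)" if "U_CF S"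
  proof -
    from that obtain A where A: "finite A" "generates S A" "context_free (WP S A)" unfolding U_CF_def by blast
    have "context_free (WP (S \<times>\<times> T) (A \<times> carrier T))"
      unfolding WP_eq[OF sT fT dT A(1,2)]
      by (rule cf_transduce[OF A(3) fQ finSig[OF sT fT dT A(1,2)] inj q0 FQ hd_ok[OF sT fT dT A(1,2)]])
    moreover have "finite (A \<times> carrier T)" using A(1) fT by auto
    ultimately show ?thesis unfolding U_CF_def using gen_B[OF sT fT dT A(1,2)] by blast
  qed
  have dcf: "U_DCF (S \<times>\<times> T)" if "U_DCF S"
  proof -
    from that obtain A where A: "finite A" "generates S A" "det_context_free (WP S A)" unfolding U_DCF_def by blast
    have "det_context_free (WP (S \<times>\<times> T) (A \<times> carrier T))"
      unfolding WP_eq[OF sT fT dT A(1,2)]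
      by (rule dcf_transduce[OF A(3) fQ finSig[OF sT fT dT A(1,2)] inj q0 FQ hd_ok[OF sT fT dT A(1,2)]])
    moreover have "finite (A \<times> carrier T)" using A(1) fT by auto
    ultimately show ?thesis unfolding U_DCF_def using gen_B[OF sT fT dT A(1,2)] by blast
  qed
  show ?thesis using cf dcf by blast
qed

end
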